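(* Let $F$ be a finite subset of $\mathbb{Z}^k$ that tiles $\mathbb{Z}^k$, and let $D=(F-F)\setminus\{0\}$. Then $\mathrm{Md}_{\mathbb{Z}^k}(D)=1/|F|$.
   Context: $F$ tiles $\mathbb{Z}^k$ if there is $C\subset\mathbb{Z}^k$ with $\mathbb{Z}^k=\bigsqcup_{x\in C}(F+x)$ (disjoint union). For $E\subset\mathbb{Z}^k$: $\phi_E(S)=\max\{|A|:A\subset S,\ (A-A)\cap E=\emptyset\}$ for finite $S$, and $\mathrm{Md}_{\mathbb{Z}^k}(E)=\lim_N\phi_E(F_N)/|F_N|$ for any Følner sequence $(F_N)$ in $\mathbb{Z}^k$ (limit exists, independent of the sequence). *)

theory Defs
  imports "HOL-Analysis.Analysis"
begin

text \<open>Z^k is modelled as the type int ^ 'k for a finite index type 'k (k = CARD('k)).\<close>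

definition difference_set :: "'a::ab_group_add set \<Rightarrow> 'a set \<Rightarrow> 'a set" where
  "difference_set A B = {a - b | a b. a \<in> A \<and> b \<in> B}"

definition tiles :: "'a::ab_group_add set \<Rightarrow> bool" where
  "tiles F \<longleftrightarrow> (\<exists>C. (\<Union>x\<in>C. (\<lambda>f. f + x) ` F) = UNIV \<and>
     (\<forall>x\<in>C. \<forall>y\<in>C. x \<noteq> y \<longrightarrow> ((\<lambda>f. f + x) ` F) \<inter> ((\<lambda>f. f + y) ` F) = {}))"

definition phi :: "'a::ab_group_add set \<Rightarrow> 'a set \<Rightarrow> nat" where
  "phi E S = Max {card A | A. A \<subseteq> S \<and> difference_set A A \<inter> E = {}}"

definition folner :: "(nat \<Rightarrow> 'a::ab_group_add set) \<Rightarrow> bool" where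
  "folner S \<longleftrightarrow> (\<forall>N. finite (S N) \<and> S N \<noteq> {}) \<and>
     (\<forall>g. (\<lambda>N. real (card ((((\<lambda>x. x + g) ` S N) - S N) \<union> (S N - ((\<lambda>x. x + g) ` S N))))
                  / real (card (S N))) \<longlonglongrightarrow> 0)"

definition has_Md :: "'a::ab_group_add set \<Rightarrow> real \<Rightarrow> bool" where
  "has_Md E L \<longleftrightarrow> (\<forall>S. folner S \<longrightarrow>
     (\<lambda>N. real (phi E (S N)) / real (card (S N))) \<longlonglongrightarrow> L)"

end

theory Submission
  imports Defs
begin

abbreviation symd :: "'a::ab_group_add set \<Rightarrow> 'a \<Rightarrow> 'a set" where
  "symd S g \<equiv> (((\<lambda>x. x + g) ` S) - S) \<union> (S - ((\<lambda>x. x + g) ` S))"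

lemma phi_ge:
  assumes "finite S" "A \<subseteq> S" "difference_set A A \<inter> E = {}"
  shows "card A \<le> phi E S"
  unfolding phi_def
proof (rule Max_ge)
  show "finite {card A |A. A \<subseteq> S \<and> difference_set A A \<inter> E = {}}"
    by (rule finite_subset[of _ "{..card S}"]) (auto intro: card_mono assms(1))
qed (use assms in auto)

lemma phi_attained:
  assumes "finite S"
  shows "\<exists>A. A \<subseteq> S \<and> difference_set A A \<inter> E = {} \<and> card A = phi E S"
proof -
  let ?M = "{card A |A. A \<subseteq> S \<and> difference_set A A \<inter> E = {}}"
  have fin: "finite ?M"
    by (rule finite_subset[of _ "{..card S}"]) (auto intro: card_mono assms(1))
  have "(0::nat) \<in> ?M"
    by (rule CollectI, rule exI[of _ "{}"]) (auto simp: difference_set_def)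
  then have ne: "?M \<noteq> {}" by blast
  have "Max ?M \<in> ?M" using Max_in[OF fin ne] .
  then show ?thesis unfolding phi_def by auto
qed

lemma upper:
  fixes F S :: "'a::ab_group_add set"
  assumes "finite S" "finite F"
  shows "phi (difference_set F F - {0}) S * card F \<le> card S + (\<Sum>f\<in>F. card (symd S f))"
proof -
  obtain A where A: "A \<subseteq> S" "difference_set A A \<inter> (difference_set F F - {0}) = {}"
    "card A = phi (difference_set F F - {0}) S"
    using phi_attained[OF assms(1)] by blast
  have finA: "finite A" using A(1) assms(1) finite_subset by blast
  have inj: "inj_on (\<lambda>(a,f). a + f) (A \<times> F)"
  proof (rule inj_onI, clarsimp)
    fix a f a' f'
    assume h: "a \<in> A" "f \<in> F" "a' \<in> A" "f' \<in> F" "a + f = a' + f'"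
    have "a - a' = f' - f" using h(5) by (simp add: algebra_simps)
    moreover have "a - a' \<in> difference_set A A" using h unfolding difference_set_def by blast
    moreover have "f' - f \<in> difference_set F F" using h unfolding difference_set_def by blast
    ultimately have "a - a' = 0" using A(2) by auto
    then show "a = a' \<and> f = f'" using h(5) by auto
  qed
  have sub: "(\<lambda>(a,f). a + f) ` (A \<times> F) \<subseteq> S \<union> (\<Union>f\<in>F. symd S f)"
    using A(1) by auto
  have "card A * card F = card ((\<lambda>(a,f). a + f) ` (A \<times> F))"
    using card_image[OF inj] by (simp add: card_cartesian_product)
  also have "\<dots> \<le> card (S \<union> (\<Union>f\<in>F. symd S f))"
    by (rule card_mono[OF _ sub]) (use assms in auto)
  also have "\<dots> \<le> card S + card (\<Union>f\<in>F. symd S f)" by (rule card_Un_le)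
  also have "card (\<Union>f\<in>F. symd S f) \<le> (\<Sum>f\<in>F. card (symd S f))" by (rule card_UN_le[OF assms(2)])
  finally show ?thesis using A(3) by simp
qed

lemma lower:
  fixes F S :: "'a::ab_group_add set"
  assumes "finite S" "finite F" "tiles F"
  shows "card S \<le> card F * phi (difference_set F F - {0}) S"
proof -
  obtain C where C: "(\<Union>x\<in>C. (\<lambda>f. f + x) ` F) = UNIV"
    "\<forall>x\<in>C. \<forall>y\<in>C. x \<noteq> y \<longrightarrow> ((\<lambda>f. f + x) ` F) \<inter> ((\<lambda>f. f + y) ` F) = {}"
    using assms(3) unfolding tiles_def by blast
  have uniq: "\<And>f f' c c'. f \<in> F \<Longrightarrow> f' \<in> F \<Longrightarrow> c \<in> C \<Longrightarrow> c' \<in> C \<Longrightarrow> f + c = f' + c' \<Longrightarrow> c = c' \<and> f = f'"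
  proof -
    fix f f' c c' assume h: "f \<in> F" "f' \<in> F" "c \<in> C" "c' \<in> C" "f + c = f' + c'"
    have "c = c'"
    proof (rule ccontr)
      assume "c \<noteq> c'"
      then have "((\<lambda>f. f + c) ` F) \<inter> ((\<lambda>f. f + c') ` F) = {}" using C(2) h by blast
      moreover have "f + c \<in> ((\<lambda>f. f + c) ` F)" using h(1) by blast
      moreover have "f + c \<in> ((\<lambda>f. f + c') ` F)" by (rule image_eqI[of _ _ f']) (use h in auto)
      ultimately show False by blast
    qed
    then show "c = c' \<and> f = f'" using h(5) by simp
  qed
  define h where "h f = card {s\<in>S. s - f \<in> C}" for f
  have one: "(\<Sum>f\<in>F. if s - f \<in> C then 1 else 0) = (1::nat)" for s
  proof -
    have "s \<in> (\<Union>x\<in>C. (\<lambda>f. f + x) ` F)" using C(1) by simp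
    then obtain c where c: "c \<in> C" "s \<in> (\<lambda>f. f + c) ` F" by blast
    then obtain f0 where f0: "f0 \<in> F" "s = f0 + c" by blast
    have cf: "c \<in> C" "f0 \<in> F" "s = f0 + c" using c f0 by auto
    have st: "F \<inter> {f. s - f \<in> C} = {f0}"
    proof (rule set_eqI, rule iffI)
      fix f assume "f \<in> F \<inter> {f. s - f \<in> C}"
      then have ff: "f \<in> F" "s - f \<in> C" by auto
      have "f + (s - f) = f0 + c" using cf(3) by simp
      then have "f = f0" using uniq[OF ff(1) cf(2) ff(2) cf(1)] by blast
      then show "f \<in> {f0}" by simp
    next
      fix f assume "f \<in> {f0}"
      then have "f = f0" by simp
      moreover have "s - f0 = c" using cf(3) by simp
      ultimately show "f \<in> F \<inter> {f. s - f \<in> C}" using cf by simp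
    qed
    have "(\<Sum>f\<in>F. if s - f \<in> C then 1 else 0) = card (F \<inter> {f. s - f \<in> C})"
      using assms(2) by (simp add: sum.If_cases)
    thus ?thesis using st by simp
  qed
  have "card S = (\<Sum>s\<in>S. \<Sum>f\<in>F. if s - f \<in> C then 1 else (0::nat))" using one by simp
  also have "\<dots> = (\<Sum>f\<in>F. \<Sum>s\<in>S. if s - f \<in> C then 1 else (0::nat))" by (rule sum.swap)
  also have "\<dots> = (\<Sum>f\<in>F. h f)"
    unfolding h_def by (rule sum.cong) (use assms(1) in \<open>auto simp: sum.If_cases Int_def\<close>)
  finally have cs: "card S = (\<Sum>f\<in>F. h f)" .
  have Fne: "F \<noteq> {}" using C(1) by auto
  have mx: "Max (h ` F) \<in> h ` F" using Max_in assms(2) Fne by auto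
  then obtain f where f: "f \<in> F" "h f = Max (h ` F)" by auto
  have "\<forall>g\<in>F. h g \<le> h f" using f assms(2) by auto
  then have "card S \<le> card F * h f" using cs sum_bounded_above[of F h "h f"] by simp
  moreover have "h f \<le> phi (difference_set F F - {0}) S"
    unfolding h_def
  proof (rule phi_ge[OF assms(1)])
    show "difference_set {s \<in> S. s - f \<in> C} {s \<in> S. s - f \<in> C} \<inter> (difference_set F F - {0}) = {}"
    proof (rule ccontr)
      assume "\<not> ?thesis"
      then obtain a b f1 f2 where ab: "a \<in> S" "a - f \<in> C" "b \<in> S" "b - f \<in> C" "f1 \<in> F" "f2 \<in> F"
        "a - b = f1 - f2" "a - b \<noteq> 0" unfolding difference_set_def by blast
      have "f2 + (a - f) = f1 + (b - f)" using ab(7) by (simp add: algebra_simps)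
      then have "a - f = b - f" using uniq[of f2 f1 "a - f" "b - f"] ab by auto
      then show False using ab(8) by simp
    qed
  qed auto
  ultimately show ?thesis by (meson le_trans mult_le_mono2)
qed

theorem mainTheorem6:
  fixes F :: "(int ^ 'k) set"
  assumes "finite F" and "tiles F"
  shows "has_Md (difference_set F F - {0}) (1 / real (card F))"
  unfolding has_Md_def
proof (intro allI impI)
  fix S :: "nat \<Rightarrow> (int ^ 'k) set"
  assume fo: "folner S"
  let ?D = "difference_set F F - {0}"
  have fin: "finite (S N)" "S N \<noteq> {}" for N using fo unfolding folner_def by auto
  have lim0: "(\<lambda>N. real (card (symd (S N) g)) / real (card (S N))) \<longlonglongrightarrow> 0" for g
    using fo unfolding folner_def by auto
  have Fne: "F \<noteq> {}" using assms(2) unfolding tiles_def by auto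
  then have cF: "real (card F) > 0" using assms(1) by (simp add: card_gt_0_iff)
  let ?u = "\<lambda>N. 1 / real (card F) + (1 / real (card F)) *
     (\<Sum>f\<in>F. real (card (symd (S N) f)) / real (card (S N)))"
  show "(\<lambda>N. real (phi ?D (S N)) / real (card (S N))) \<longlonglongrightarrow> 1 / real (card F)"
  proof (rule tendsto_sandwich[of "\<lambda>_. 1 / real (card F)" _ _ ?u])
    show "((\<lambda>_. 1 / real (card F)) \<longlongrightarrow> 1 / real (card F)) sequentially" by simp
    have "?u \<longlonglongrightarrow> 1 / real (card F) + (1 / real (card F)) * (\<Sum>f\<in>F. 0)"
      by (intro tendsto_intros lim0)
    then show "?u \<longlonglongrightarrow> 1 / real (card F)" by simp
    show "\<forall>\<^sub>F N in sequentially. 1 / real (card F) \<le> real (phi ?D (S N)) / real (card (S N))"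
    proof (rule always_eventually, rule allI)
      fix N
      have cS: "real (card (S N)) > 0" using fin[of N] by (simp add: card_gt_0_iff)
      have "real (card (S N)) \<le> real (card F) * real (phi ?D (S N))"
        using lower[OF fin(1) assms(1) assms(2), of N] by (metis of_nat_le_iff of_nat_mult)
      then show "1 / real (card F) \<le> real (phi ?D (S N)) / real (card (S N))"
        using cS cF by (simp add: field_simps)
    qed
    show "\<forall>\<^sub>F N in sequentially. real (phi ?D (S N)) / real (card (S N)) \<le> ?u N"
    proof (rule always_eventually, rule allI)
      fix N
      have cS: "real (card (S N)) > 0" using fin[of N] by (simp add: card_gt_0_iff)
      have n: "phi ?D (S N) * card F \<le> card (S N) + (\<Sum>f\<in>F. card (symd (S N) f))"
        using upper[OF fin(1) assms(1), of N] .
      have "real (phi ?D (S N) * card F) \<le> real (card (S N) + (\<Sum>f\<in>F. card (symd (S N) f)))"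
        using n by (simp only: of_nat_le_iff)
      then have r: "real (phi ?D (S N)) * real (card F) \<le> real (card (S N)) + (\<Sum>f\<in>F. real (card (symd (S N) f)))"
        by (simp only: of_nat_mult of_nat_add of_nat_sum)
      define a where "a = real (phi ?D (S N))"
      define b where "b = real (card (S N)) + (\<Sum>f\<in>F. real (card (symd (S N) f)))"
      define c where "c = real (card F)"
      define t where "t = real (card (S N))"
      have ab: "a * c \<le> b" using r unfolding a_def b_def c_def .
      have c0: "c > 0" and t0: "t > 0" using cF cS unfolding c_def t_def by auto
      have "a \<le> b / c" using ab c0 by (simp add: pos_le_divide_eq)
      then have "a / t \<le> b / c / t" using t0 by (intro divide_right_mono) auto
      also have "b / c / t = 1 / c + (1 / c) * (\<Sum>f\<in>F. real (card (symd (S N) f)) / t)"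
        unfolding b_def using c0 t0 by (simp add: sum_divide_distrib[symmetric] add_divide_distrib divide_divide_eq_left mult.commute t_def[symmetric])
      finally have "a / t \<le> 1 / c + (1 / c) * (\<Sum>f\<in>F. real (card (symd (S N) f)) / t)" .
      then show "real (phi ?D (S N)) / real (card (S N)) \<le> ?u N" unfolding a_def c_def t_def .
    qed
  qed
qed

end
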